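(* Let $n\ge1$, $k\ge1$, $A\in\{1,\dots,n\}^k$ and $B\subset\{1,\dots,n\}$ with $|B|=k+1$. Let $\tilde A=c^{1-\rho(A,B)}A$, $\tilde B=c^{1-\rho(A,B)}B$, let $I=(i_1\le\dots\le i_k)$ be the non-decreasing rearrangement of $\tilde A$, and $(j_1,\dots,j_k)=\Pi(I,\tilde B)$. Then $i_l<j_l$ for all $l$ and the chain of transpositions $((i_1\,j_1),\dots,(i_k\,j_k))$ belongs to $\Sigma^*_n(k)$.
   Context: $\mathfrak S_n$ is the symmetric group on $\{1,\dots,n\}$; products are composed right to left. $\mathsf T_n$ is the set of transpositions, always written $(i\,j)$ with $i<j$. For $\sigma\in\mathfrak S_n$, $|\sigma|=n-(\text{number of cycles of }\sigma\text{, fixed points counted})$; $\sigma_1\preccurlyeq\sigma_2$ iff $|\sigma_2|=|\sigma_1|+|\sigma_1^{-1}\sigma_2|$. $\Sigma_n(k)=\{(\tau_1,\dots,\tau_k)\in(\mathsf T_n)^k : |\tau_1\cdots\tau_k|=k,\ \tau_1\cdots\tau_k\preccurlyeq(1\,2\,\dots\,n)\}$, and $\Sigma^*_n(k)$ is the set of its elements $((i_1\,j_1),\dots,(i_k\,j_k))$ with $i_1\le\dots\le i_k$. Let $c=(1\,2\,\dots\,n)$ be the cyclic shift $x\mapsto x+1$ for $x<n$, $n\mapsto1$, acting componentwise on sequences and elementwise on sets; powers are taken modulo $n$. Parking process: given $E=(e_1,\dots,e_k)\in\{1,\dots,n\}^k$ and $O\subset\{1,\dots,n\}$ with $|O|=k+1$,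 define $p_k=c^{r}(e_k)$ where $r=\min\{s\in\{1,\dots,n\}: c^s(e_k)\in O\}$ and, backwards, $p_l=c^{r}(e_l)$ where $r=\min\{s\in\{1,\dots,n\}: c^s(e_l)\in O\setminus\{p_{l+1},\dots,p_k\}\}$. Write $\Pi(E,O)=(p_1,\dots,p_k)$; the unique element of $O\setminus\{p_1,\dots,p_k\}$ is the residue $\rho(E,O)$. *)

theory Defs
  imports Main "HOL-Combinatorics.Transposition"
begin

text \<open>Permutations of {1..n} are functions nat => nat (identity outside {1..n}).
  The cycles of sigma, fixed points counted, are the orbits of the points of {1..n}.\<close>

definition orb :: "(nat \<Rightarrow> nat) \<Rightarrow> nat \<Rightarrow> nat set" where
  "orb \<sigma> x = {y. \<exists>m. (\<sigma> ^^ m) x = y}"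

definition num_cycles :: "nat \<Rightarrow> (nat \<Rightarrow> nat) \<Rightarrow> nat" where
  "num_cycles n \<sigma> = card (orb \<sigma> ` {1..n})"

definition plen :: "nat \<Rightarrow> (nat \<Rightarrow> nat) \<Rightarrow> nat" where
  "plen n \<sigma> = n - num_cycles n \<sigma>"

definition preceq :: "nat \<Rightarrow> (nat \<Rightarrow> nat) \<Rightarrow> (nat \<Rightarrow> nat) \<Rightarrow> bool" where
  "preceq n \<sigma>1 \<sigma>2 \<longleftrightarrow> plen n \<sigma>2 = plen n \<sigma>1 + plen n (inv \<sigma>1 \<circ> \<sigma>2)"

text \<open>Cyclic shift c = (1 2 ... n), and its powers.\<close>
definition cshift :: "nat \<Rightarrow> nat \<Rightarrow> nat" where
  "cshift n x = (if x < n then x + 1 else 1)"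

definition long_cycle :: "nat \<Rightarrow> nat \<Rightarrow> nat" where
  "long_cycle n x = (if x \<in> {1..n} then cshift n x else x)"

definition cpow :: "nat \<Rightarrow> int \<Rightarrow> nat \<Rightarrow> nat" where
  "cpow n e = cshift n ^^ nat (e mod int n)"

text \<open>Transpositions (i j), i<j, in S_n; a chain is a list of pairs (i,j);
  the product tau_1 ... tau_k is composed right to left.\<close>
definition is_transp :: "nat \<Rightarrow> nat \<times> nat \<Rightarrow> bool" where
  "is_transp n t \<longleftrightarrow> 1 \<le> fst t \<and> fst t < snd t \<and> snd t \<le> n"

definition chain_prod :: "(nat \<times> nat) list \<Rightarrow> nat \<Rightarrow> nat" where
  "chain_prod ts = foldr (\<lambda>t f. transpose (fst t) (snd t) \<circ> f) ts id"

definition Sigma_chains :: "nat \<Rightarrow> nat \<Rightarrow> (nat \<times> nat) list set" where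
  "Sigma_chains n k = {ts. length ts = k \<and> (\<forall>t\<in>set ts. is_transp n t)
      \<and> plen n (chain_prod ts) = k \<and> preceq n (chain_prod ts) (long_cycle n)}"

definition Sigma_star :: "nat \<Rightarrow> nat \<Rightarrow> (nat \<times> nat) list set" where
  "Sigma_star n k = {ts \<in> Sigma_chains n k. sorted (map fst ts)}"

text \<open>Parking process, computed backwards: park n Os (e_1 # ... # e_k) = (p_1,...,p_k).\<close>
fun park :: "nat \<Rightarrow> nat set \<Rightarrow> nat list \<Rightarrow> nat list" where
  "park n Os [] = []"
| "park n Os (e # es) =
    (let ps = park n Os es;
         r = (LEAST s. 1 \<le> s \<and> s \<le> n \<and> (cshift n ^^ s) e \<in> Os - set ps)
     in (cshift n ^^ r) e # ps)"

definition residue :: "nat \<Rightarrow> nat list \<Rightarrow> nat set \<Rightarrow> nat" where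
  "residue n E Os = (THE x. x \<in> Os - set (park n Os E))"

end

theory Submission
  imports Defs "HOL-Combinatorics.Permutations" "HOL-Combinatorics.Orbits"
begin


lemma orb_orbit: "permutation h \<Longrightarrow> orb h z = orbit h z"
  unfolding orb_def by (auto simp: orbit_altdef_permutation)

lemma orb_self: "z \<in> orb h z"
  unfolding orb_def by (auto intro: exI[of _ 0])

lemma orb_eq: "permutation h \<Longrightarrow> w \<in> orb h z \<Longrightarrow> orb h w = orb h z"
  by (simp add: orb_orbit) (meson orbit_swap orbit_trans permutation_self_in_orbit subsetI subset_antisym)

lemma orb_step: "h z \<in> orb h z"
  unfolding orb_def by (auto intro: exI[of _ 1])

lemma orb_subset: "h permutes S \<Longrightarrow> z \<in> S \<Longrightarrow> orb h z \<subseteq> S"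
proof
  fix y assume "h permutes S" "z \<in> S" "y \<in> orb h z"
  then obtain m where "y = (h ^^ m) z" unfolding orb_def by auto
  moreover have "(h ^^ m) z \<in> S" for m
    using \<open>z \<in> S\<close> by (induct m) (auto simp: permutes_in_image[OF \<open>h permutes S\<close>])
  ultimately show "y \<in> S" by simp
qed

lemma orb_closed:
  assumes "\<And>w. w \<in> T \<Longrightarrow> h w \<in> T" "z \<in> T" shows "orb h z \<subseteq> T"
proof
  fix y assume "y \<in> orb h z"
  then obtain m where "y = (h ^^ m) z" unfolding orb_def by auto
  moreover have "(h ^^ m) z \<in> T" for m using assms by (induct m) auto
  ultimately show "y \<in> T" by simp
qed

definition cls where
  "cls f a b z = (if z \<in> orb f a \<union> orb f b then orb f a \<union> orb f b else orb f z)"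

lemma merge:
  assumes fin: "finite S" and pf: "f permutes S" and pg: "g permutes S"
    and a: "a \<in> S" and b: "b \<in> S" and ab: "orb f a \<noteq> orb f b"
    and C1: "\<And>z. z \<in> S \<Longrightarrow> g z \<in> cls f a b z"
    and C2: "\<And>z. z \<in> S \<Longrightarrow> f z \<in> orb g z"
    and C3: "b \<in> orb g a"
  shows "card (orb g ` S) + 1 = card (orb f ` S)"
proof -
  have permf: "permutation f" using fin pf permutation_permutes by blast
  have permg: "permutation g" using fin pg permutation_permutes by blast
  define U where "U = orb f a \<union> orb f b"
  have clsU: "z \<in> U \<Longrightarrow> cls f a b z = U" for z by (simp add: cls_def U_def)
  have clsN: "z \<notin> U \<Longrightarrow> cls f a b z = orb f z" for z by (simp add: cls_def U_def)
  have cls_self: "z \<in> cls f a b z" for z by (cases "z \<in> U") (auto simp: clsU clsN orb_self U_def)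
  have cls_eq: "w \<in> cls f a b z \<Longrightarrow> cls f a b w = cls f a b z" for w z
  proof (cases "z \<in> U")
    case True
    assume "w \<in> cls f a b z"
    then have "w \<in> U" using True clsU by auto
    then show ?thesis using True clsU by auto
  next
    case False
    assume w: "w \<in> cls f a b z"
    then have ow: "orb f w = orb f z" using False clsN orb_eq[OF permf] by auto
    have "w \<notin> U"
    proof
      assume "w \<in> U"
      then have "orb f w = orb f a \<or> orb f w = orb f b" unfolding U_def using orb_eq[OF permf] by auto
      then have "z \<in> U" using ow orb_self[of z f] unfolding U_def by auto
      then show False using False by simp
    qed
    then show ?thesis using False clsN ow by auto
  qed
  have clsS: "z \<in> S \<Longrightarrow> cls f a b z \<subseteq> S" for z
  proof (cases "z \<in> U")
    case True
    assume "z \<in> S"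
    have "U \<subseteq> S" unfolding U_def using orb_subset[OF pf a] orb_subset[OF pf b] by blast
    then show ?thesis using True clsU by simp
  next
    case False
    assume "z \<in> S"
    then show ?thesis using False clsN orb_subset[OF pf] by simp
  qed
  have key: "orb g z = cls f a b z" if z: "z \<in> S" for z
  proof
    show "orb g z \<subseteq> cls f a b z"
    proof (rule orb_closed)
      fix w assume "w \<in> cls f a b z"
      then have "w \<in> S" "cls f a b w = cls f a b z" using clsS[OF z] cls_eq by auto
      then show "g w \<in> cls f a b z" using C1 by metis
    qed (rule cls_self)
    have fg: "orb f y \<subseteq> orb g y" if y: "y \<in> S" for y
    proof (rule orb_closed)
      fix w assume w: "w \<in> orb g y"
      then have "w \<in> S" using orb_subset[OF pg y] by auto
      then have "f w \<in> orb g w" using C2 by auto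
      then show "f w \<in> orb g y" using orb_eq[OF permg w] by simp
    qed (rule orb_self)
    show "cls f a b z \<subseteq> orb g z"
    proof (cases "z \<in> U")
      case False then show ?thesis using clsN fg z by auto
    next
      case True
      have gb: "orb g b = orb g a" using orb_eq[OF permg C3] .
      have "orb g z = orb g a"
      proof -
        from True have "z \<in> orb g a \<or> z \<in> orb g b" using fg a b unfolding U_def by auto
        then show ?thesis using gb orb_eq[OF permg] by auto
      qed
      then show ?thesis using True clsU fg[OF a] fg[OF b] gb unfolding U_def by auto
    qed
  qed
  have img: "orb g ` S = insert U (orb f ` S - {orb f a, orb f b})"
  proof (intro set_eqI iffI)
    fix X assume "X \<in> orb g ` S"
    then obtain z where z: "z \<in> S" "X = orb g z" by auto
    show "X \<in> insert U (orb f ` S - {orb f a, orb f b})"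
    proof (cases "z \<in> U")
      case True then show ?thesis using z key clsU by auto
    next
      case False
      then have "orb f z \<noteq> orb f a" "orb f z \<noteq> orb f b" using orb_self[of z f] unfolding U_def by auto
      then show ?thesis using z key clsN False by auto
    qed
  next
    fix X assume X: "X \<in> insert U (orb f ` S - {orb f a, orb f b})"
    show "X \<in> orb g ` S"
    proof (cases "X = U")
      case True
      have "a \<in> U" unfolding U_def using orb_self by auto
      then show ?thesis using True key[OF a] clsU a by auto
    next
      case False
      then obtain z where z: "z \<in> S" "X = orb f z" "orb f z \<noteq> orb f a" "orb f z \<noteq> orb f b" using X by auto
      have "z \<notin> U" using z orb_eq[OF permf] unfolding U_def by auto
      then have "orb g z = X" using z key clsN by simp
      then show ?thesis using z(1) by blast
    qed
  qed
  have Unot: "U \<notin> orb f ` S - {orb f a, orb f b}"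
  proof
    assume "U \<in> orb f ` S - {orb f a, orb f b}"
    then obtain z where z: "U = orb f z" "orb f z \<noteq> orb f a" by auto
    have "a \<in> orb f z" using z orb_self[of a f] unfolding U_def by auto
    then show False using z orb_eq[OF permf] by metis
  qed
  have "card (orb g ` S) = card (orb f ` S - {orb f a, orb f b}) + 1"
    using img Unot fin by simp
  moreover have "card (orb f ` S - {orb f a, orb f b}) + 2 = card (orb f ` S)"
  proof -
    have "{orb f a, orb f b} \<subseteq> orb f ` S" using a b by auto
    moreover have "card {orb f a, orb f b} = 2" using ab by simp
    moreover have "finite (orb f ` S)" using fin by simp
    ultimately show ?thesis using card_Diff_subset[of "{orb f a, orb f b}" "orb f ` S"] card_mono[of "orb f ` S" "{orb f a, orb f b}"]
      by simp
  qed
  ultimately show ?thesis by simp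
qed



lemma cshift_in: "1 \<le> n \<Longrightarrow> cshift n x \<in> {1..n}"
  by (auto simp: cshift_def)

lemma cs_pow_in: "1 \<le> n \<Longrightarrow> x \<in> {1..n} \<Longrightarrow> (cshift n ^^ s) x \<in> {1..n}"
  by (induct s) (auto simp: cshift_def)

lemma cs_pow_add: "x + s \<le> n \<Longrightarrow> (cshift n ^^ s) x = x + s"
  by (induct s) (auto simp: cshift_def)

lemma cs_pow_wrap: "1 \<le> x \<Longrightarrow> x \<le> n \<Longrightarrow> (cshift n ^^ (n - x + 1)) x = 1"
proof -
  assume "1 \<le> x" "x \<le> n"
  then have "(cshift n ^^ (n - x)) x = n" using cs_pow_add[of x "n - x" n] by simp
  then show ?thesis by (simp add: cshift_def)
qed

lemma cs_pow_comp: "(cshift n ^^ a) ((cshift n ^^ b) x) = (cshift n ^^ (a + b)) x"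
  by (simp add: funpow_add)

lemma cs_reach:
  assumes "x \<in> {1..n}" "y \<in> {1..n}" shows "\<exists>s. 1 \<le> s \<and> s \<le> n \<and> (cshift n ^^ s) x = y"
proof (cases "x < y")
  case True
  then show ?thesis using assms cs_pow_add[of x "y - x" n] by (intro exI[of _ "y - x"]) auto
next
  case False
  have w: "(cshift n ^^ (n - x + 1)) x = 1" using assms cs_pow_wrap by auto
  have "(cshift n ^^ (y - 1)) 1 = y" using assms cs_pow_add[of 1 "y - 1" n] by auto
  then have "(cshift n ^^ (y - 1 + (n - x + 1))) x = y" using w cs_pow_comp by metis
  moreover have "y - 1 + (n - x + 1) = n - x + y" using assms by auto
  ultimately have "(cshift n ^^ (n - x + y)) x = y" by (simp add: add.commute)
  then show ?thesis using assms False by (intro exI[of _ "n - x + y"]) auto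
qed

lemma cshift_inj: "inj_on (cshift n) {1..n}"
  by (auto simp: inj_on_def cshift_def split: if_splits)

lemma cs_pow_inj: "1 \<le> n \<Longrightarrow> inj_on (cshift n ^^ e) {1..n}"
proof (induct e)
  case 0 then show ?case by simp
next
  case (Suc e)
  have "inj_on (cshift n \<circ> (cshift n ^^ e)) {1..n}"
    by (rule comp_inj_on[OF Suc(1)[OF Suc(2)]]) (rule inj_on_subset[OF cshift_inj], use cs_pow_in Suc(2) in auto)
  then show ?case by (simp add: o_def)
qed

lemma long_cycle_permutes: "1 \<le> n \<Longrightarrow> long_cycle n permutes {1..n}"
proof (rule bij_imp_permutes)
  assume n: "1 \<le> n"
  have "bij_betw (cshift n) {1..n} {1..n}"
  proof (rule bij_betw_imageI[OF cshift_inj])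
    show "cshift n ` {1..n} = {1..n}"
    proof
      show "cshift n ` {1..n} \<subseteq> {1..n}" using cshift_in n by auto
      show "{1..n} \<subseteq> cshift n ` {1..n}"
      proof
        fix y assume y: "y \<in> {1..n}"
        show "y \<in> cshift n ` {1..n}"
        proof (cases "y = 1")
          case True then show ?thesis using n by (intro image_eqI[of _ _ n]) (auto simp: cshift_def)
        next
          case False then show ?thesis using y by (intro image_eqI[of _ _ "y - 1"]) (auto simp: cshift_def)
        qed
      qed
    qed
  qed
  then show "bij_betw (long_cycle n) {1..n} {1..n}"
    by (rule bij_betw_cong[THEN iffD1, rotated]) (auto simp: long_cycle_def)
qed (auto simp: long_cycle_def)

lemma lc_pow: "1 \<le> n \<Longrightarrow> x \<in> {1..n} \<Longrightarrow> (long_cycle n ^^ s) x = (cshift n ^^ s) x"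
proof (induct s)
  case (Suc s)
  then have "(cshift n ^^ s) x \<in> {1..n}" using cs_pow_in by blast
  then show ?case using Suc by (simp add: long_cycle_def)
qed simp

lemma num_cycles_lc: "1 \<le> n \<Longrightarrow> num_cycles n (long_cycle n) = 1"
proof -
  assume n: "1 \<le> n"
  have "orb (long_cycle n) x = {1..n}" if x: "x \<in> {1..n}" for x
  proof
    show "orb (long_cycle n) x \<subseteq> {1..n}" using orb_subset[OF long_cycle_permutes[OF n] x] .
    show "{1..n} \<subseteq> orb (long_cycle n) x"
    proof
      fix y assume "y \<in> {1..n}"
      then obtain s where "(cshift n ^^ s) x = y" using cs_reach x by blast
      then show "y \<in> orb (long_cycle n) x" using lc_pow[OF n x] unfolding orb_def by auto
    qed
  qed
  then have "orb (long_cycle n) ` {1..n} = {{1..n}}" using n by auto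
  then show ?thesis by (simp add: num_cycles_def)
qed

lemma num_cycles_id: "num_cycles n id = n"
proof -
  have "orb id x = {x}" for x unfolding orb_def by auto
  then have "orb id ` {1..n} = (\<lambda>x. {x}) ` {1..n}" by auto
  moreover have "card ((\<lambda>x. {x}) ` {1..n}) = n" by (subst card_image) (auto simp: inj_on_def)
  ultimately show ?thesis by (simp add: num_cycles_def)
qed

lemma chain_prod_Cons: "chain_prod (t # ts) = transpose (fst t) (snd t) \<circ> chain_prod ts"
  by (simp add: chain_prod_def)

lemma chain_prod_append: "chain_prod (ts @ [(a,b)]) = chain_prod ts \<circ> transpose a b"
  by (induct ts) (auto simp: chain_prod_def)

lemma chain_prod_permutes:
  "(\<forall>t\<in>set ts. fst t \<in> S \<and> snd t \<in> S) \<Longrightarrow> chain_prod ts permutes S"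
  by (induct ts) (auto simp: chain_prod_def permutes_id intro!: permutes_compose permutes_swap_id)

lemma chain_prod_fix:
  "y \<notin> fst ` set ts \<Longrightarrow> y \<notin> snd ` set ts \<Longrightarrow> chain_prod ts y = y"
  by (induct ts) (auto simp: chain_prod_def transpose_apply_other)



definition nxt :: "nat \<Rightarrow> nat set \<Rightarrow> nat \<Rightarrow> nat" where
  "nxt n F e = (cshift n ^^ (LEAST s. 1 \<le> s \<and> s \<le> n \<and> (cshift n ^^ s) e \<in> F)) e"

lemma park_Cons: "park n Os (e # es) = nxt n (Os - set (park n Os es)) e # park n Os es"
  by (simp add: Let_def nxt_def)

declare park.simps(2)[simp del]

lemma nxt_in_S: "1 \<le> n \<Longrightarrow> e \<in> {1..n} \<Longrightarrow> nxt n F e \<in> {1..n}"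
  unfolding nxt_def by (rule cs_pow_in)

lemma park_in_S: "1 \<le> n \<Longrightarrow> set E \<subseteq> {1..n} \<Longrightarrow> set (park n Os E) \<subseteq> {1..n}"
proof (induct E)
  case (Cons a E)
  assume n: "1 \<le> n" and s: "set (a # E) \<subseteq> {1..n}"
  then have "nxt n (Os - set (park n Os E)) a \<in> {1..n}" using nxt_in_S[OF n] by simp
  then show ?case using Cons s n by (simp add: park_Cons)
qed simp

lemma nxt_ex: "F \<subseteq> {1..n} \<Longrightarrow> F \<noteq> {} \<Longrightarrow> e \<in> {1..n} \<Longrightarrow> \<exists>s. 1 \<le> s \<and> s \<le> n \<and> (cshift n ^^ s) e \<in> F"
  using cs_reach by blast

lemma nxt_in: "F \<subseteq> {1..n} \<Longrightarrow> F \<noteq> {} \<Longrightarrow> e \<in> {1..n} \<Longrightarrow> nxt n F e \<in> F"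
  unfolding nxt_def using LeastI_ex[OF nxt_ex] by blast

lemma nxt_eqI:
  assumes "1 \<le> r" "r \<le> n" "(cshift n ^^ r) e \<in> F"
    and "\<And>s. 1 \<le> s \<Longrightarrow> s < r \<Longrightarrow> (cshift n ^^ s) e \<notin> F"
  shows "nxt n F e = (cshift n ^^ r) e"
proof -
  have "(LEAST s. 1 \<le> s \<and> s \<le> n \<and> (cshift n ^^ s) e \<in> F) = r"
  proof (rule Least_equality)
    show "1 \<le> r \<and> r \<le> n \<and> (cshift n ^^ r) e \<in> F" using assms(1-3) by simp
    fix y assume y: "1 \<le> y \<and> y \<le> n \<and> (cshift n ^^ y) e \<in> F"
    show "r \<le> y"
    proof (rule ccontr)
      assume "\<not> r \<le> y"
      then show False using assms(4)[of y] y by simp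
    qed
  qed
  then show ?thesis by (simp add: nxt_def)
qed

lemma nxt_props:
  assumes "F \<subseteq> {1..n}" "F \<noteq> {}" "e \<in> {1..n}"
  obtains r where "1 \<le> r" "r \<le> n" "(cshift n ^^ r) e \<in> F"
    "\<And>s. 1 \<le> s \<Longrightarrow> s < r \<Longrightarrow> (cshift n ^^ s) e \<notin> F" "nxt n F e = (cshift n ^^ r) e"
proof -
  define r where "r = (LEAST s. 1 \<le> s \<and> s \<le> n \<and> (cshift n ^^ s) e \<in> F)"
  have P: "1 \<le> r \<and> r \<le> n \<and> (cshift n ^^ r) e \<in> F" unfolding r_def by (rule LeastI_ex[OF nxt_ex[OF assms]])
  have Q: "(cshift n ^^ s) e \<notin> F" if s: "1 \<le> s" "s < r" for s
  proof -
    have "\<not> (1 \<le> s \<and> s \<le> n \<and> (cshift n ^^ s) e \<in> F)"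
      using not_less_Least[of s "\<lambda>s. 1 \<le> s \<and> s \<le> n \<and> (cshift n ^^ s) e \<in> F"] s(2) unfolding r_def by blast
    then show ?thesis using s P by simp
  qed
  show ?thesis
  proof (rule that)
    show "1 \<le> r" "r \<le> n" "(cshift n ^^ r) e \<in> F" using P by auto
    show "(cshift n ^^ s) e \<notin> F" if "1 \<le> s" "s < r" for s using Q that by blast
    show "nxt n F e = (cshift n ^^ r) e" by (simp add: nxt_def r_def)
  qed
qed

lemma park_basic:
  assumes "1 \<le> n" "Os \<subseteq> {1..n}" "set E \<subseteq> {1..n}" "length E \<le> card Os"
  shows "length (park n Os E) = length E \<and> distinct (park n Os E) \<and> set (park n Os E) \<subseteq> Os"
  using assms(3,4)
proof (induct E)
  case Nil then show ?case by simp
next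
  case (Cons e es)
  let ?ps = "park n Os es"
  have IH: "length ?ps = length es" "distinct ?ps" "set ?ps \<subseteq> Os" using Cons by auto
  have fin: "finite Os" using assms(2) finite_subset by blast
  have "card (set ?ps) = length es" using IH distinct_card by metis
  then have "card (Os - set ?ps) = card Os - length es" using IH fin by (simp add: card_Diff_subset)
  then have "card (Os - set ?ps) \<ge> 1" using Cons.prems by simp
  then have "Os - set ?ps \<noteq> {}" by (metis card.empty not_one_le_zero)
  moreover have "Os - set ?ps \<subseteq> {1..n}" using assms(2) by auto
  moreover have "e \<in> {1..n}" using Cons.prems by simp
  ultimately have "nxt n (Os - set ?ps) e \<in> Os - set ?ps" using nxt_in by blast
  then show ?case using IH by (simp add: park_Cons)
qed

lemma park_append: "park n Os (xs @ zs) = park n (Os - set (park n Os zs)) xs @ park n Os zs"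
proof (induct xs)
  case Nil then show ?case by simp
next
  case (Cons x xs)
  have "Os - set (park n (Os - set (park n Os zs)) xs @ park n Os zs)
        = Os - set (park n Os zs) - set (park n (Os - set (park n Os zs)) xs)" by auto
  then show ?case using Cons by (simp add: park_Cons)
qed

lemma nxt_mono:
  assumes "G \<subseteq> F" "F \<subseteq> {1..n}" "F \<noteq> {}" "e \<in> {1..n}" "nxt n F e \<in> G"
  shows "nxt n G e = nxt n F e"
proof -
  obtain r where r: "1 \<le> r" "r \<le> n" "(cshift n ^^ r) e \<in> F"
    "\<And>s. 1 \<le> s \<Longrightarrow> s < r \<Longrightarrow> (cshift n ^^ s) e \<notin> F" "nxt n F e = (cshift n ^^ r) e"
    using nxt_props[OF assms(2-4)] by blast
  show ?thesis using r assms(1,5) by (subst nxt_eqI[of r]) auto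
qed

lemma nxt_remove:
  assumes F: "F \<subseteq> {1..n}" and e: "e \<in> {1..n}" and x: "x = nxt n F e" and ne: "F - {x} \<noteq> {}"
  shows "nxt n (F - {x}) e = nxt n (F - {x}) x"
proof -
  have "F \<noteq> {}" using ne by auto
  then obtain r where r: "1 \<le> r" "r \<le> n" "(cshift n ^^ r) e \<in> F"
    "\<And>s. 1 \<le> s \<Longrightarrow> s < r \<Longrightarrow> (cshift n ^^ s) e \<notin> F" "nxt n F e = (cshift n ^^ r) e"
    using nxt_props[OF F _ e] by blast
  obtain r' where r': "1 \<le> r'" "r' \<le> n" "(cshift n ^^ r') e \<in> F - {x}"
    "\<And>s. 1 \<le> s \<Longrightarrow> s < r' \<Longrightarrow> (cshift n ^^ s) e \<notin> F - {x}" "nxt n (F - {x}) e = (cshift n ^^ r') e"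
    using nxt_props[OF _ ne e] F by blast
  have "r < r'"
  proof -
    have "\<not> r' < r"
    proof
      assume "r' < r"
      then have "(cshift n ^^ r') e \<notin> F" using r(4) r'(1) by blast
      then show False using r'(3) by simp
    qed
    moreover have "r' \<noteq> r" using r'(3) r(5) x by auto
    ultimately show ?thesis by simp
  qed
  have "nxt n (F - {x}) x = (cshift n ^^ (r' - r)) x"
  proof (rule nxt_eqI)
    show "1 \<le> r' - r" "r' - r \<le> n" using \<open>r < r'\<close> r'(2) by auto
    have xr: "(cshift n ^^ t) x = (cshift n ^^ (t + r)) e" for t using x r(5) cs_pow_comp by simp
    show "(cshift n ^^ (r' - r)) x \<in> F - {x}" using xr[of "r' - r"] r'(3) \<open>r < r'\<close> by simp
    show "(cshift n ^^ s) x \<notin> F - {x}" if "1 \<le> s" "s < r' - r" for s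
      using xr[of s] r'(4)[of "s + r"] that by simp
  qed
  also have "\<dots> = (cshift n ^^ r') e" using x r(5) cs_pow_comp \<open>r < r'\<close> by simp
  finally show ?thesis using r'(5) by simp
qed

lemma nxt_swap:
  assumes F: "F \<subseteq> {1..n}" and a: "a \<in> {1..n}" and b: "b \<in> {1..n}" and c: "2 \<le> card F"
  shows "{nxt n F b, nxt n (F - {nxt n F b}) a} = {nxt n F a, nxt n (F - {nxt n F a}) b}"
proof -
  have fin: "finite F" using c card.infinite by fastforce
  have ne: "F - {x} \<noteq> {}" for x
  proof
    assume "F - {x} = {}"
    then have "F \<subseteq> {x}" by auto
    then have "card F \<le> 1" using card_mono[of "{x}" F] by simp
    then show False using c by simp
  qed
  have Fne: "F \<noteq> {}" using ne by auto
  show ?thesis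
  proof (cases "nxt n F a = nxt n F b")
    case True
    then show ?thesis using nxt_remove[OF F a refl ne] nxt_remove[OF F b refl ne] by simp
  next
    case False
    have 1: "nxt n (F - {nxt n F b}) a = nxt n F a"
      by (rule nxt_mono[OF _ F Fne a]) (use nxt_in[OF F Fne a] False in auto)
    have 2: "nxt n (F - {nxt n F a}) b = nxt n F b"
      by (rule nxt_mono[OF _ F Fne b]) (use nxt_in[OF F Fne b] False in auto)
    show ?thesis using 1 2 by auto
  qed
qed



lemma park_swap:
  assumes n: "1 \<le> n" and Os: "Os \<subseteq> {1..n}" and a: "a \<in> {1..n}" and b: "b \<in> {1..n}"
    and zs: "set zs \<subseteq> {1..n}" and len: "length zs + 2 \<le> card Os"
  shows "set (park n Os (a # b # zs)) = set (park n Os (b # a # zs))"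
proof -
  define ps where "ps = park n Os zs"
  define F where "F = Os - set ps"
  have bas: "length ps = length zs" "distinct ps" "set ps \<subseteq> Os"
    using park_basic[OF n Os zs] len unfolding ps_def by auto
  have fin: "finite Os" using Os finite_subset by blast
  have "card (set ps) = length zs" using bas distinct_card by metis
  then have cF: "card F = card Os - length zs" using bas fin unfolding F_def by (simp add: card_Diff_subset)
  then have c2: "2 \<le> card F" using len by simp
  have FS: "F \<subseteq> {1..n}" using Os unfolding F_def by auto
  have e1: "Os - set (nxt n F b # ps) = F - {nxt n F b}" unfolding F_def by auto
  have e2: "Os - set (nxt n F a # ps) = F - {nxt n F a}" unfolding F_def by auto
  have "set (park n Os (a # b # zs)) = {nxt n F b, nxt n (F - {nxt n F b}) a} \<union> set ps"
    using e1 by (simp add: park_Cons ps_def[symmetric] F_def[symmetric] insert_commute)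
  also have "\<dots> = {nxt n F a, nxt n (F - {nxt n F a}) b} \<union> set ps"
    using nxt_swap[OF FS a b c2] by simp
  also have "\<dots> = set (park n Os (b # a # zs))"
    using e2 by (simp add: park_Cons ps_def[symmetric] F_def[symmetric] insert_commute)
  finally show ?thesis .
qed

lemma park_append_cong:
  "set (park n Os zs1) = set (park n Os zs2) \<Longrightarrow> set (park n Os (xs @ zs1)) = set (park n Os (xs @ zs2))"
  by (simp add: park_append)

lemma park_move:
  assumes n: "1 \<le> n" and Os: "Os \<subseteq> {1..n}"
  shows "e \<in> {1..n} \<Longrightarrow> set xs \<subseteq> {1..n} \<Longrightarrow> set ys \<subseteq> {1..n} \<Longrightarrow> length xs + length ys + 1 \<le> card Os \<Longrightarrow>
    set (park n Os (e # xs @ ys)) = set (park n Os (xs @ e # ys))"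
proof (induct xs)
  case Nil then show ?case by simp
next
  case (Cons x xs)
  have "set (park n Os (e # x # (xs @ ys))) = set (park n Os (x # e # (xs @ ys)))"
    by (rule park_swap[OF n Os]) (use Cons.prems in auto)
  also have "\<dots> = set (park n Os ([x] @ (e # xs @ ys)))" by simp
  also have "\<dots> = set (park n Os ([x] @ (xs @ e # ys)))"
    by (rule park_append_cong, rule Cons.hyps) (use Cons.prems in auto)
  finally show ?case by simp
qed

lemma park_perm:
  assumes n: "1 \<le> n" and Os: "Os \<subseteq> {1..n}"
  shows "mset E1 = mset E2 \<Longrightarrow> set E1 \<subseteq> {1..n} \<Longrightarrow> length E1 \<le> card Os \<Longrightarrow>
    set (park n Os E1) = set (park n Os E2)"
proof (induct E1 arbitrary: E2)
  case Nil then show ?case by simp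
next
  case (Cons e es)
  have "e \<in> set E2" using Cons.prems(1) by (metis list.set_intros(1) set_mset_mset)
  then obtain xs ys where E2: "E2 = xs @ e # ys" by (meson split_list)
  have m: "mset es = mset (xs @ ys)" using Cons.prems(1) E2 by simp
  have sxy: "set (xs @ ys) \<subseteq> {1..n}" using Cons.prems(2) m by (metis set_mset_mset set_subset_Cons subset_trans)
  have "set (park n Os (e # es)) = set (park n Os ([e] @ es))" by simp
  also have "\<dots> = set (park n Os ([e] @ (xs @ ys)))"
    by (rule park_append_cong, rule Cons.hyps[OF m]) (use Cons.prems in auto)
  also have "\<dots> = set (park n Os (xs @ e # ys))"
  proof -
    have "length (xs @ ys) = length es" using m by (metis size_mset)
    then show ?thesis using park_move[OF n Os, of e xs ys] Cons.prems sxy by simp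
  qed
  finally show ?case using E2 by simp
qed

lemma nxt_rot:
  assumes n: "1 \<le> n" and F: "F \<subseteq> {1..n}" and e: "e \<in> {1..n}"
  shows "nxt n ((cshift n ^^ d) ` F) ((cshift n ^^ d) e) = (cshift n ^^ d) (nxt n F e)"
proof -
  let ?h = "cshift n ^^ d"
  have comm: "(cshift n ^^ s) (?h y) = ?h ((cshift n ^^ s) y)" for s y
    using cs_pow_comp[where n=n and a=s and b=d and x=y] cs_pow_comp[where n=n and a=d and b=s and x=y]
    by (simp add: add.commute)
  have mem: "?h ((cshift n ^^ s) e) \<in> ?h ` F \<longleftrightarrow> (cshift n ^^ s) e \<in> F" for s
    using inj_on_image_mem_iff[OF cs_pow_inj[OF n, of d] cs_pow_in[OF n e, of s] F] .
  have "(LEAST s. 1 \<le> s \<and> s \<le> n \<and> (cshift n ^^ s) (?h e) \<in> ?h ` F)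
      = (LEAST s. 1 \<le> s \<and> s \<le> n \<and> (cshift n ^^ s) e \<in> F)"
    by (simp add: comm mem)
  then show ?thesis unfolding nxt_def by (simp add: comm)
qed

lemma park_rot:
  assumes n: "1 \<le> n" and Os: "Os \<subseteq> {1..n}"
  shows "set E \<subseteq> {1..n} \<Longrightarrow> park n ((cshift n ^^ d) ` Os) (map (cshift n ^^ d) E) = map (cshift n ^^ d) (park n Os E)"
proof (induct E)
  case Nil then show ?case by simp
next
  case (Cons e es)
  let ?h = "cshift n ^^ d"
  have IH: "park n (?h ` Os) (map ?h es) = map ?h (park n Os es)" using Cons by simp
  have ps: "set (park n Os es) \<subseteq> {1..n}" using park_in_S[OF n] Cons.prems by simp
  have "?h ` Os - set (map ?h (park n Os es)) = ?h ` (Os - set (park n Os es))"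
  proof -
    have "Os - set (park n Os es) \<subseteq> {1..n}" using Os by auto
    then show ?thesis using inj_on_image_set_diff[OF cs_pow_inj[OF n, of d] _ ps] by simp
  qed
  moreover have "Os - set (park n Os es) \<subseteq> {1..n}" using Os by auto
  ultimately show ?case using IH nxt_rot[OF n _ , of "Os - set (park n Os es)" e d] Cons.prems
    by (simp add: park_Cons)
qed

lemma nxt_nowrap:
  assumes n: "1 \<le> n" and F: "F \<subseteq> {1..n}" and one: "1 \<in> F" and e: "e \<in> {1..n}"
    and ne: "nxt n F e \<noteq> 1"
  shows "e < nxt n F e \<and> (\<forall>y. e < y \<and> y < nxt n F e \<longrightarrow> y \<notin> F)"
proof -
  obtain r where r: "1 \<le> r" "r \<le> n" "(cshift n ^^ r) e \<in> F"
    "\<And>s. 1 \<le> s \<Longrightarrow> s < r \<Longrightarrow> (cshift n ^^ s) e \<notin> F" "nxt n F e = (cshift n ^^ r) e"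
    using nxt_props[OF F _ e] one by blast
  have w: "(cshift n ^^ (n - e + 1)) e = 1" using e cs_pow_wrap by auto
  have "\<not> n - e + 1 < r" using r(4)[of "n - e + 1"] w one by auto
  moreover have "r \<noteq> n - e + 1" using ne r(5) w by auto
  ultimately have rl: "e + r \<le> n" using e by auto
  then have val: "nxt n F e = e + r" using r(5) cs_pow_add by simp
  have "y \<notin> F" if "e < y" "y < e + r" for y
    using r(4)[of "y - e"] cs_pow_add[of e "y - e" n] that rl by simp
  then show ?thesis using val r(1) by auto
qed



lemma orb_fix: "h p = p \<Longrightarrow> orb h p = {p}"
proof -
  assume h: "h p = p"
  have "(h ^^ m) p = p" for m by (induct m) (auto simp: h)
  then show ?thesis unfolding orb_def by auto
qed

lemma cls_sup: "permutation f \<Longrightarrow> orb f z \<subseteq> cls f a b z"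
  unfolding cls_def using orb_eq by auto

lemma cls_U: "z \<in> orb f a \<union> orb f b \<Longrightarrow> cls f a b z = orb f a \<union> orb f b"
  unfolding cls_def by auto

lemma C1_left:
  assumes pf: "permutation f" and g: "g z = transpose a b (f z)"
  shows "g z \<in> cls f a b z"
proof (cases "f z \<in> {a, b}")
  case False
  then have "g z = f z" using g by auto
  then show ?thesis using orb_step[of f z] cls_sup[OF pf, of z a b] by auto
next
  case True
  have "orb f z = orb f (f z)" using orb_eq[OF pf orb_step] by simp
  then have "z \<in> orb f a \<union> orb f b" using True orb_self[of z f] by auto
  then have "cls f a b z = orb f a \<union> orb f b" by (rule cls_U)
  moreover have "g z \<in> {a, b}" using True g by auto
  ultimately show ?thesis using orb_self by auto
qed

lemma C2_left:
  assumes pg: "permutation g" and ab: "b \<in> orb g a" and f: "f z = transpose a b (g z)"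
  shows "f z \<in> orb g z"
proof (cases "g z \<in> {a, b}")
  case False
  then have "f z = g z" using f by auto
  then show ?thesis using orb_step by metis
next
  case True
  have oz: "orb g z = orb g (g z)" using orb_eq[OF pg orb_step] by simp
  have "orb g b = orb g a" using orb_eq[OF pg ab] .
  then have "orb g z = orb g a" using True oz by auto
  moreover have "f z \<in> {a, b}" using True f by auto
  ultimately show ?thesis using orb_self ab by auto
qed

lemma main_ind:
  assumes n: "1 \<le> n"
  shows "sorted I \<Longrightarrow> set I \<subseteq> {1..n} \<Longrightarrow> Os \<subseteq> {1..n} \<Longrightarrow> 1 \<in> Os \<Longrightarrow> length I < card Os \<Longrightarrow>
    1 \<notin> set (park n Os I) \<Longrightarrow>
    length (park n Os I) = length I \<and> set (park n Os I) \<subseteq> Os \<and>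
    (\<forall>l<length I. I ! l < park n Os I ! l) \<and>
    num_cycles n (chain_prod (zip I (park n Os I))) = n - length I \<and>
    num_cycles n (inv (chain_prod (zip I (park n Os I))) \<circ> long_cycle n) = length I + 1"
proof (induct I arbitrary: Os rule: rev_induct)
  case Nil
  have "chain_prod [] = id" by (simp add: chain_prod_def)
  then show ?case using num_cycles_id num_cycles_id[unfolded id_def] num_cycles_lc[OF n] by simp
next
  case (snoc x I')
  let ?S = "{1..n}"
  have xS: "x \<in> ?S" using snoc.prems(2) by simp
  have OsS: "Os \<subseteq> ?S" using snoc.prems(3) .
  define p where "p = nxt n Os x"
  have p1: "park n Os [x] = [p]" by (simp add: park_Cons p_def)
  define Os' where "Os' = Os - {p}"
  have parkI: "park n Os (I' @ [x]) = park n Os' I' @ [p]"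
    using park_append[of n Os I' "[x]"] p1 by (simp add: Os'_def)
  have pne1: "p \<noteq> 1" using snoc.prems(6) parkI by auto
  have Osne: "Os \<noteq> {}" using snoc.prems(4) by auto
  have pOs: "p \<in> Os" using nxt_in[OF OsS Osne xS] p_def by simp
  have nw: "x < p" "\<And>y. x < y \<Longrightarrow> y < p \<Longrightarrow> y \<notin> Os"
    using nxt_nowrap[OF n OsS snoc.prems(4) xS] pne1 p_def by auto
  have pS: "p \<in> ?S" using pOs OsS by auto
  have srt: "sorted I'" and Ix: "\<And>y. y \<in> set I' \<Longrightarrow> y \<le> x" using snoc.prems(1) by (auto simp: sorted_append)
  have fin: "finite Os" using OsS finite_subset by blast
  have cOs': "card Os' = card Os - 1" using pOs fin by (simp add: Os'_def)
  have IH: "length (park n Os' I') = length I' \<and> set (park n Os' I') \<subseteq> Os' \<and>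
    (\<forall>l<length I'. I' ! l < park n Os' I' ! l) \<and>
    num_cycles n (chain_prod (zip I' (park n Os' I'))) = n - length I' \<and>
    num_cycles n (inv (chain_prod (zip I' (park n Os' I'))) \<circ> long_cycle n) = length I' + 1"
  proof (rule snoc.hyps)
    show "sorted I'" by (rule srt)
    show "set I' \<subseteq> ?S" using snoc.prems(2) by simp
    show "Os' \<subseteq> ?S" using OsS by (auto simp: Os'_def)
    show "1 \<in> Os'" using snoc.prems(4) pne1 by (simp add: Os'_def)
    show "length I' < card Os'" using snoc.prems(5) cOs' by simp
    show "1 \<notin> set (park n Os' I')" using snoc.prems(6) parkI by simp
  qed
  define J' where "J' = park n Os' I'"
  define ts where "ts = zip I' J'"
  define \<sigma>' where "\<sigma>' = chain_prod ts"
  have lenJ': "length J' = length I'" using IH J'_def by simp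
  have J'Os: "set J' \<subseteq> Os'" using IH J'_def by simp
  have zipI: "zip (I' @ [x]) (park n Os (I' @ [x])) = ts @ [(x, p)]"
    using parkI lenJ' by (simp add: ts_def J'_def)
  have \<sigma>: "chain_prod (zip (I' @ [x]) (park n Os (I' @ [x]))) = \<sigma>' \<circ> transpose x p"
    using zipI chain_prod_append by (simp add: \<sigma>'_def)
  have tsS: "\<forall>t\<in>set ts. fst t \<in> ?S \<and> snd t \<in> ?S"
  proof
    fix t assume "t \<in> set ts"
    then obtain u v where t: "t = (u, v)" "(u, v) \<in> set (zip I' J')" unfolding ts_def by (metis surj_pair)
    then have "u \<in> set I'" "v \<in> set J'" by (auto dest: set_zip_leftD set_zip_rightD)
    then show "fst t \<in> ?S \<and> snd t \<in> ?S" using t snoc.prems(2) J'Os OsS by (auto simp: Os'_def)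
  qed
  have perm\<sigma>': "\<sigma>' permutes ?S" using chain_prod_permutes[OF tsS] \<sigma>'_def by simp
  have fix\<sigma>': "\<sigma>' y = y" if "x < y" "y \<le> p" for y
  proof -
    have "y \<notin> fst ` set ts"
    proof
      assume "y \<in> fst ` set ts"
      then have "y \<in> set I'" unfolding ts_def by (auto dest: set_zip_leftD)
      then show False using Ix that by fastforce
    qed
    moreover have "y \<notin> snd ` set ts"
    proof
      assume "y \<in> snd ` set ts"
      then have "y \<in> set J'" unfolding ts_def by (auto dest: set_zip_rightD)
      then have "y \<in> Os" "y \<noteq> p" using J'Os by (auto simp: Os'_def)
      then show False using nw that by fastforce
    qed
    ultimately show ?thesis unfolding \<sigma>'_def by (rule chain_prod_fix)
  qed
  have tau: "transpose x p permutes ?S" using xS pS by (rule permutes_swap_id)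
  have fS: "finite ?S" by simp
  have pp\<sigma>': "permutation \<sigma>'" using perm\<sigma>' fS permutation_permutes by blast
  have pptau: "permutation (transpose x p)" by (rule permutation_swap_id)
  define g where "g = \<sigma>' \<circ> transpose x p"
  have pg: "g permutes ?S" unfolding g_def by (rule permutes_compose[OF tau perm\<sigma>'])
  have xp: "x \<noteq> p" using nw by simp
  have \<sigma>'p: "\<sigma>' p = p" using fix\<sigma>' nw by simp
  have gx: "g x = p" using \<sigma>'p by (simp add: g_def)
  have gp: "g p = \<sigma>' x" by (simp add: g_def)
  have mg: "card (orb g ` ?S) + 1 = card (orb \<sigma>' ` ?S)"
  proof (rule merge[OF fS perm\<sigma>' pg xS pS])
    show "orb \<sigma>' x \<noteq> orb \<sigma>' p" using orb_fix[of \<sigma>' p, OF \<sigma>'p] orb_self[of x \<sigma>'] xp by auto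
    show "g z \<in> cls \<sigma>' x p z" if "z \<in> ?S" for z
    proof -
      consider "z = x" | "z = p" | "z \<noteq> x" "z \<noteq> p" by blast
      then show ?thesis
      proof cases
        case 1 then show ?thesis using gx cls_U[of x \<sigma>' x p] orb_self by auto
      next
        case 2 then show ?thesis using gp cls_U[of p \<sigma>' x p] orb_self orb_step by auto
      next
        case 3
        then have "g z = \<sigma>' z" by (simp add: g_def)
        then show ?thesis using orb_step[of \<sigma>' z] cls_sup[OF pp\<sigma>', of z x p] by auto
      qed
    qed
    show "\<sigma>' z \<in> orb g z" if "z \<in> ?S" for z
    proof -
      consider "z = x" | "z = p" | "z \<noteq> x" "z \<noteq> p" by blast
      then show ?thesis
      proof cases
        case 1
        have "(g ^^ 2) x = \<sigma>' x" using gx gp by (simp add: numeral_2_eq_2)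
        then show ?thesis using 1 unfolding orb_def by blast
      next
        case 2 then show ?thesis using \<sigma>'p orb_self by simp
      next
        case 3
        then have "g z = \<sigma>' z" by (simp add: g_def)
        then show ?thesis using orb_step by metis
      qed
    qed
    show "p \<in> orb g x" using gx orb_step by metis
  qed
  define \<pi>' where "\<pi>' = inv \<sigma>' \<circ> long_cycle n"
  define \<pi> where "\<pi> = transpose x p \<circ> \<pi>'"
  have inv\<sigma>: "inv (\<sigma>' \<circ> transpose x p) \<circ> long_cycle n = \<pi>"
    using permutation_inverse_compose[OF pp\<sigma>' pptau] by (simp add: \<pi>_def \<pi>'_def o_assoc)
  have perm\<pi>': "\<pi>' permutes ?S" unfolding \<pi>'_def
    by (rule permutes_compose[OF long_cycle_permutes[OF n] permutes_inv[OF perm\<sigma>']])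
  have perm\<pi>: "\<pi> permutes ?S" unfolding \<pi>_def by (rule permutes_compose[OF perm\<pi>' tau])
  have pp\<pi>': "permutation \<pi>'" using perm\<pi>' fS permutation_permutes by blast
  have pp\<pi>: "permutation \<pi>" using perm\<pi> fS permutation_permutes by blast
  have \<pi>'step: "\<pi>' y = y + 1" if "x \<le> y" "y < p" for y
  proof -
    have "y \<in> ?S" "y < n" using that xS pS by auto
    then have "long_cycle n y = y + 1" by (simp add: long_cycle_def cshift_def)
    moreover have "inv \<sigma>' (y + 1) = y + 1" using fix\<sigma>' that permutes_inv_eq[OF perm\<sigma>'] by simp
    ultimately show ?thesis by (simp add: \<pi>'_def)
  qed
  have \<pi>'pow: "m \<le> p - x \<Longrightarrow> (\<pi>' ^^ m) x = x + m" for m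
  proof (induct m)
    case (Suc m)
    then have "(\<pi>' ^^ m) x = x + m" by simp
    then show ?case using \<pi>'step[of "x + m"] Suc.prems by simp
  qed simp
  have px: "p \<in> orb \<pi>' x" using \<pi>'pow[of "p - x"] nw unfolding orb_def by auto
  have \<pi>step: "\<pi> y = (if y + 1 = p then x else y + 1)" if "x \<le> y" "y < p" for y
    using \<pi>'step[OF that] that by (simp add: \<pi>_def)
  have orb\<pi>x: "orb \<pi> x \<subseteq> {x..<p}"
  proof (rule orb_closed)
    fix w assume "w \<in> {x..<p}"
    then show "\<pi> w \<in> {x..<p}" using \<pi>step[of w] nw by auto
  qed (use nw in auto)
  have mp: "card (orb \<pi>' ` ?S) + 1 = card (orb \<pi> ` ?S)"
  proof (rule merge[OF fS perm\<pi> perm\<pi>' xS pS])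
    show "orb \<pi> x \<noteq> orb \<pi> p" using orb\<pi>x orb_self[of p \<pi>] by auto
    show "\<pi>' z \<in> cls \<pi> x p z" if "z \<in> ?S" for z
      by (rule C1_left[OF pp\<pi>]) (simp add: \<pi>_def)
    show "\<pi> z \<in> orb \<pi>' z" if "z \<in> ?S" for z
      by (rule C2_left[OF pp\<pi>' px]) (simp add: \<pi>_def)
    show "p \<in> orb \<pi>' x" by (rule px)
  qed
  have nc\<sigma>': "num_cycles n \<sigma>' = n - length I'" using IH by (simp add: \<sigma>'_def ts_def J'_def)
  have nc\<pi>': "num_cycles n \<pi>' = length I' + 1" using IH by (simp add: \<pi>'_def \<sigma>'_def ts_def J'_def)
  show ?case
  proof (intro conjI)
    show "length (park n Os (I' @ [x])) = length (I' @ [x])" using parkI lenJ' J'_def by simp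
    show "set (park n Os (I' @ [x])) \<subseteq> Os" using parkI J'Os pOs J'_def by (auto simp: Os'_def)
    show "\<forall>l<length (I' @ [x]). (I' @ [x]) ! l < park n Os (I' @ [x]) ! l"
    proof (intro allI impI)
      fix l assume l: "l < length (I' @ [x])"
      show "(I' @ [x]) ! l < park n Os (I' @ [x]) ! l"
      proof (cases "l < length I'")
        case True then show ?thesis using IH parkI lenJ' J'_def by (simp add: nth_append)
      next
        case False
        then have "l = length I'" using l by simp
        then show ?thesis using parkI lenJ' J'_def nw by (simp add: nth_append)
      qed
    qed
    show "num_cycles n (chain_prod (zip (I' @ [x]) (park n Os (I' @ [x])))) = n - length (I' @ [x])"
      using \<sigma> mg nc\<sigma>' by (simp add: num_cycles_def g_def)
    show "num_cycles n (inv (chain_prod (zip (I' @ [x]) (park n Os (I' @ [x])))) \<circ> long_cycle n) = length (I' @ [x]) + 1"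
      using \<sigma> inv\<sigma> mp nc\<pi>' by (simp add: num_cycles_def)
  qed
qed



theorem lemma5p3:
  fixes n k :: nat and A :: "nat list" and B :: "nat set"
  assumes "n \<ge> 1" and "k \<ge> 1"
    and "length A = k" and "set A \<subseteq> {1..n}"
    and "B \<subseteq> {1..n}" and "card B = k + 1"
  shows "let m = 1 - int (residue n A B);
             At = map (cpow n m) A;
             Bt = cpow n m ` B;
             I = sort At;
             J = park n Bt I
         in (\<forall>l < k. I ! l < J ! l) \<and> zip I J \<in> Sigma_star n k"
proof -
  note n = assms(1)
  let ?S = "{1..n}"
  define P where "P = park n B A"
  have basP: "length P = k" "distinct P" "set P \<subseteq> B"
    using park_basic[OF n assms(5) assms(4)] assms(3,6) unfolding P_def by auto
  have finB: "finite B" using assms(5) finite_subset by blast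
  have "card (set P) = k" using basP distinct_card by metis
  then have "card (B - set P) = 1" using basP finB assms(6) by (simp add: card_Diff_subset)
  then obtain r where r: "B - set P = {r}" by (rule card_1_singletonE)
  have res: "residue n A B = r" unfolding residue_def P_def[symmetric] r by simp
  have rB: "r \<in> B" "r \<notin> set P" using r by auto
  have rS: "r \<in> ?S" using rB assms(5) by auto
  define d where "d = nat ((1 - int r) mod int n)"
  define h where "h = cshift n ^^ d"
  have cp: "cpow n (1 - int (residue n A B)) = h" by (simp only: cpow_def h_def d_def res)
  have hr: "h r = 1"
  proof (cases "r = 1")
    case True
    then have "1 - int r = 0" by simp
    then have "d = 0" by (simp add: d_def)
    then show ?thesis using True by (simp add: h_def)
  next
    case False
    have "(1 - int r) mod int n = (1 - int r + int n) mod int n" by (rule mod_add_self2[symmetric])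
    also have "\<dots> = 1 - int r + int n"
    proof -
      have "2 \<le> r" "r \<le> n" using False rS by auto
      then have "int 2 \<le> int r" "int r \<le> int n" by (simp only: of_nat_le_iff)+
      then show ?thesis by (intro mod_pos_pos_trivial) linarith+
    qed
    also have "1 - int r + int n = int (n - r + 1)" using rS by auto
    finally have e: "(1 - int r) mod int n = int (n - r + 1)" .
    have "d = n - r + 1" unfolding d_def e by (rule nat_int)
    then show ?thesis unfolding h_def by (simp only:) (rule cs_pow_wrap, use rS in auto)
  qed
  have hinj: "inj_on h ?S" unfolding h_def by (rule cs_pow_inj[OF n])
  have hS: "y \<in> ?S \<Longrightarrow> h y \<in> ?S" for y unfolding h_def by (rule cs_pow_in[OF n])
  define At where "At = map h A"
  define Bt where "Bt = h ` B"
  define I where "I = sort At"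
  have prot: "park n Bt At = map h P"
    unfolding At_def Bt_def h_def P_def by (rule park_rot[OF n assms(5) assms(4)])
  have one_notin: "1 \<notin> set (park n Bt At)"
  proof
    assume "1 \<in> set (park n Bt At)"
    then obtain y where y: "y \<in> set P" "h y = 1" using prot by auto
    have "y \<in> ?S" using y basP assms(5) by auto
    then have "y = r" using inj_on_eq_iff[OF hinj \<open>y \<in> ?S\<close> rS] y hr by simp
    then show False using y rB by simp
  qed
  have oneBt: "1 \<in> Bt" unfolding Bt_def using hr rB(1) by (metis image_eqI)
  have BtS: "Bt \<subseteq> ?S" using hS assms(5) by (auto simp: Bt_def)
  have cBt: "card Bt = k + 1" unfolding Bt_def using card_image[OF inj_on_subset[OF hinj assms(5)]] assms(6) by simp
  have AtS: "set At \<subseteq> ?S" using hS assms(4) by (auto simp: At_def)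
  have lenI: "length I = k" using assms(3) by (simp add: I_def At_def)
  have IS: "set I \<subseteq> ?S" using AtS by (simp add: I_def)
  have "set (park n Bt I) = set (park n Bt At)"
    by (rule park_perm[OF n BtS]) (use IS lenI cBt in \<open>auto simp: I_def\<close>)
  then have one_notin': "1 \<notin> set (park n Bt I)" using one_notin by simp
  have M: "length (park n Bt I) = length I \<and> set (park n Bt I) \<subseteq> Bt \<and>
    (\<forall>l<length I. I ! l < park n Bt I ! l) \<and>
    num_cycles n (chain_prod (zip I (park n Bt I))) = n - length I \<and>
    num_cycles n (inv (chain_prod (zip I (park n Bt I))) \<circ> long_cycle n) = length I + 1"
    by (rule main_ind[OF n]) (use IS BtS oneBt lenI cBt one_notin' in \<open>auto simp: I_def\<close>)
  define J where "J = park n Bt I"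
  have lenJ: "length J = k" using M lenI J_def by simp
  have JS: "set J \<subseteq> ?S" using M BtS J_def by auto
  have lt: "\<forall>l<k. I ! l < J ! l" using M lenI J_def by simp
  have kn: "k + 1 \<le> n" using cBt BtS card_mono[of ?S Bt] by simp
  have "zip I J \<in> Sigma_star n k"
    unfolding Sigma_star_def Sigma_chains_def
  proof (intro CollectI conjI ballI)
    show "length (zip I J) = k" using lenI lenJ by simp
    fix t assume "t \<in> set (zip I J)"
    then obtain l where l: "l < k" "t = (I ! l, J ! l)" using lenI lenJ by (auto simp: in_set_zip)
    have "I ! l \<in> ?S" using IS l lenI nth_mem by blast
    moreover have "J ! l \<in> ?S" using JS l lenJ nth_mem by blast
    ultimately show "is_transp n t" using l lt by (auto simp: is_transp_def)
  next
    show "plen n (chain_prod (zip I J)) = k" using M lenI kn by (simp add: plen_def J_def)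
    show "preceq n (chain_prod (zip I J)) (long_cycle n)"
      using M lenI kn num_cycles_lc[OF n] by (simp add: preceq_def plen_def J_def)
    have "map fst (zip I J) = I" using lenI lenJ by simp
    then show "sorted (map fst (zip I J))" by (simp add: I_def)
  qed
  then show ?thesis using lt unfolding Let_def cp
    by (simp add: At_def[symmetric] Bt_def[symmetric] I_def[symmetric] J_def[symmetric])
qed


end
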